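(* Let $\mathbb{F}\in\{\mathbb{R},\mathbb{C}\}$, $M>N$, and $0\le k\le M$. If $\Phi\in\mathcal{P}(M,N)$ and $\Psi\in\mathcal{P}(M,M-N)$ are Naimark complements, then $\Phi$ maximizes $NE_k$ over $\mathcal{P}(M,N)$ if and only if $\Psi$ maximizes $NE_{M-k}$ over $\mathcal{P}(M,M-N)$.
   Context: $\mathcal{P}(M,n)$ is the set of Parseval frames for $\mathbb{F}^n$ with $M$ vectors, i.e. families $\{\varphi_i\}_{i=1}^M\subseteq\mathbb{F}^n$ whose $n\times M$ matrix $\Phi$ satisfies $\Phi\Phi^*=I$. $\Phi\in\mathcal{P}(M,N)$ and $\Psi\in\mathcal{P}(M,M-N)$ are Naimark complements if $\Psi^*\Psi=I-\Phi^*\Phi$. For $K\subseteq[M]$, $\Phi_K$ is the submatrix of columns indexed by $K$. The nuclear norm $\|F\|_*$ is the sum of the singular values of $F$, and $NE_k(\Phi)=\sum_{|K|=k}\|\Phi_K\|_*$. *)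

theory Defs
  imports "Jordan_Normal_Form.Schur_Decomposition" "Jordan_Normal_Form.DL_Submatrix"
    "Jordan_Normal_Form.Char_Poly" "HOL-Computational_Algebra.Fundamental_Theorem_Algebra"
begin

text \<open>Matrices are Jordan_Normal_Form matrices; the frame vectors are the columns,
  indexed by 0..M-1.  The field F is real or complex; the scalar type is 'a and
  emb embeds it into the complex numbers (of_real for F = R, id for F = C),
  which is only used to compute singular values.\<close>

definition singular_values :: "complex mat \<Rightarrow> real multiset" where
  "singular_values F = image_mset (\<lambda>z. sqrt (Re z)) (proots (char_poly (mat_adjoint F * F)))"

definition nuclear_norm :: "complex mat \<Rightarrow> real" where
  "nuclear_norm F = sum_mset (singular_values F)"

definition parseval_frames :: "nat \<Rightarrow> nat \<Rightarrow> 'a::conjugatable_field mat set" where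
  "parseval_frames M n = {\<Phi>. \<Phi> \<in> carrier_mat n M \<and> \<Phi> * mat_adjoint \<Phi> = 1\<^sub>m n}"

definition naimark_complements :: "'a::conjugatable_field mat \<Rightarrow> 'a mat \<Rightarrow> bool" where
  "naimark_complements \<Phi> \<Psi> \<longleftrightarrow>
     mat_adjoint \<Psi> * \<Psi> = 1\<^sub>m (dim_col \<Phi>) - mat_adjoint \<Phi> * \<Phi>"

definition col_submatrix :: "'a mat \<Rightarrow> nat set \<Rightarrow> 'a mat" where
  "col_submatrix \<Phi> K = submatrix \<Phi> UNIV K"

definition NE :: "('a::conjugatable_field \<Rightarrow> complex) \<Rightarrow> nat \<Rightarrow> 'a mat \<Rightarrow> real" where
  "NE emb k \<Phi> = (\<Sum>K\<in>{K. K \<subseteq> {..<dim_col \<Phi>} \<and> card K = k}.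
      nuclear_norm (map_mat emb (col_submatrix \<Phi> K)))"

definition maximizes_NE ::
  "('a::conjugatable_field \<Rightarrow> complex) \<Rightarrow> nat \<Rightarrow> nat \<Rightarrow> nat \<Rightarrow> 'a mat \<Rightarrow> bool" where
  "maximizes_NE emb k M n \<Phi> \<longleftrightarrow>
     \<Phi> \<in> parseval_frames M n \<and> (\<forall>\<Phi>'\<in>parseval_frames M n. NE emb k \<Phi>' \<le> NE emb k \<Phi>)"

end

theory Submission
  imports Defs
begin


lemma const_poly_mat_mult:
  fixes A B :: "'a::comm_ring_1 mat"
  assumes "A \<in> carrier_mat n m" "B \<in> carrier_mat m p"
  shows "map_mat (\<lambda>a. [:a:]) (A * B) = map_mat (\<lambda>a. [:a:]) A * map_mat (\<lambda>a. [:a:]) B"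
  by (rule eq_matI) (insert assms, auto simp: scalar_prod_def sum_to_poly[symmetric] mult.commute)

lemma char_poly_alt:
  fixes A :: "'a::comm_ring_1 mat"
  assumes "A \<in> carrier_mat n n"
  shows "char_poly A = det ([:0,1:] \<cdot>\<^sub>m 1\<^sub>m n - map_mat (\<lambda>a. [:a:]) A)"
proof -
  have "char_poly_matrix A = [:0,1:] \<cdot>\<^sub>m 1\<^sub>m n - map_mat (\<lambda>a. [:a:]) A"
    by (rule eq_matI) (insert assms, auto simp: char_poly_matrix_def)
  thus ?thesis by (simp add: char_poly_def)
qed

lemma sylvester_char_poly:
  fixes A B :: "'a::field mat"
  assumes A: "A \<in> carrier_mat n m" and B: "B \<in> carrier_mat m n"
  shows "[:0,1:]^m * char_poly (A*B) = [:0,1:]^n * char_poly (B*A)"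
proof -
  let ?x = "[:0,1:] :: 'a poly"
  define Ap where "Ap = map_mat (\<lambda>a. [:a:]) A"
  define Bp where "Bp = map_mat (\<lambda>a. [:a:]) B"
  have Ap: "Ap \<in> carrier_mat n m" using A by (simp add: Ap_def)
  have Bp: "Bp \<in> carrier_mat m n" using B by (simp add: Bp_def)
  define P where "P = four_block_mat (?x \<cdot>\<^sub>m 1\<^sub>m n) Ap Bp (1\<^sub>m m)"
  have P: "P \<in> carrier_mat (n+m) (n+m)" using Ap Bp by (simp add: P_def)
  have cAB: "char_poly (A*B) = det (?x \<cdot>\<^sub>m 1\<^sub>m n - Ap * Bp)"
    using char_poly_alt[of "A*B" n] A B const_poly_mat_mult[OF A B] by (simp add: Ap_def Bp_def)
  have cBA: "char_poly (B*A) = det (?x \<cdot>\<^sub>m 1\<^sub>m m - Bp * Ap)"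
    using char_poly_alt[of "B*A" m] A B const_poly_mat_mult[OF B A] by (simp add: Ap_def Bp_def)
  have L1: "four_block_mat (1\<^sub>m n) (-Ap) (0\<^sub>m m n) (?x \<cdot>\<^sub>m 1\<^sub>m m) * P
     = four_block_mat (?x \<cdot>\<^sub>m 1\<^sub>m n - Ap*Bp) (0\<^sub>m n m) (?x \<cdot>\<^sub>m Bp) (?x \<cdot>\<^sub>m 1\<^sub>m m)"
    unfolding P_def
    apply (subst mult_four_block_mat[of _ n n _ m _ m])
    using Ap Bp by auto
  have L2: "four_block_mat (1\<^sub>m n) (0\<^sub>m n m) (-Bp) (?x \<cdot>\<^sub>m 1\<^sub>m m) * P
     = four_block_mat (?x \<cdot>\<^sub>m 1\<^sub>m n) Ap (0\<^sub>m m n) (?x \<cdot>\<^sub>m 1\<^sub>m m - Bp*Ap)"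
    unfolding P_def
    apply (subst mult_four_block_mat[of _ n n _ m _ m])
    using Ap Bp by auto
  have dL1: "det (four_block_mat (1\<^sub>m n) (-Ap) (0\<^sub>m m n) (?x \<cdot>\<^sub>m 1\<^sub>m m)) = ?x^m"
    using Ap by (subst det_four_block_mat_lower_left_zero[of _ n _ m]) auto
  have dL2: "det (four_block_mat (1\<^sub>m n) (0\<^sub>m n m) (-Bp) (?x \<cdot>\<^sub>m 1\<^sub>m m)) = ?x^m"
    using Bp by (subst det_four_block_mat_upper_right_zero[of _ n _ m]) auto
  have dR1: "det (four_block_mat (?x \<cdot>\<^sub>m 1\<^sub>m n - Ap*Bp) (0\<^sub>m n m) (?x \<cdot>\<^sub>m Bp) (?x \<cdot>\<^sub>m 1\<^sub>m m))
     = char_poly (A*B) * ?x^m"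
    using Ap Bp cAB by (subst det_four_block_mat_upper_right_zero[of _ n _ m]) auto
  have dR2: "det (four_block_mat (?x \<cdot>\<^sub>m 1\<^sub>m n) Ap (0\<^sub>m m n) (?x \<cdot>\<^sub>m 1\<^sub>m m - Bp*Ap))
     = ?x^n * char_poly (B*A)"
    using Ap Bp cBA by (subst det_four_block_mat_lower_left_zero[of _ n _ m]) auto
  have e1: "?x^m * det P = char_poly (A*B) * ?x^m"
    using arg_cong[OF L1, of det] dL1 dR1 P Ap Bp by (subst (asm) det_mult[of _ "n+m"]) auto
  have e2: "?x^m * det P = ?x^n * char_poly (B*A)"
    using arg_cong[OF L2, of det] dL2 dR2 P Ap Bp by (subst (asm) det_mult[of _ "n+m"]) auto
  have "det P = char_poly (A*B)" using e1 by (simp add: mult.commute)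
  thus ?thesis using e2 by simp
qed


lemma sum_list_singletons: "sum_list (map (\<lambda>a. {#a#}) L) = mset L"
  by (induction L) auto

lemma proots_linear_prod:
  fixes L :: "'a::idom list"
  shows "proots (\<Prod>a\<leftarrow>L. [:-a,1:]) = mset L"
proof (induction L)
  case (Cons a L)
  have nz: "(\<Prod>x\<leftarrow>L. [:-x,1:]) \<noteq> (0::'a poly)" by (auto simp: prod_list_zero_iff)
  have "proots (\<Prod>x\<leftarrow>a#L. [:-x,1:]) = proots ([:-a,1:] * (\<Prod>x\<leftarrow>L. [:-x,1:]))"
    by (simp only: list.map prod_list.Cons)
  also have "\<dots> = proots [:-a,1:] + proots (\<Prod>x\<leftarrow>L. [:-x,1:])"
    by (rule proots_mult) (use nz in auto)
  also have "\<dots> = {#a#} + mset L" using Cons by simp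
  finally show ?case by simp
qed simp

lemma proots_one_minus:
  fixes X :: "complex mat"
  assumes X: "X \<in> carrier_mat n n"
  shows "proots (char_poly (1\<^sub>m n - X)) = image_mset (\<lambda>z. 1 - z) (proots (char_poly X))"
proof -
  obtain es where es: "char_poly X = (\<Prod>a\<leftarrow>es. [:-a,1:])" using char_poly_factorized[OF X] by auto
  define T where "T = schur_upper_triangular X es"
  have T: "T \<in> carrier_mat n n" "upper_triangular T" "similar_mat X T"
    using schur_upper_triangular[OF X es] unfolding T_def by auto
  obtain n' P Q where PQ: "{X,T,P,Q} \<subseteq> carrier_mat n' n'" "P * Q = 1\<^sub>m n'" "Q * P = 1\<^sub>m n'" "X = P * T * Q"
    using similar_matD[OF T(3)] by blast
  have n': "n' = n" using PQ(1) X by auto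
  have P: "P \<in> carrier_mat n n" and Q: "Q \<in> carrier_mat n n" using PQ(1) n' by auto
  have "P * (1\<^sub>m n - T) * Q = (P - P * T) * Q"
    using mult_minus_distrib_mat[OF P one_carrier_mat T(1)] P by simp
  also have "\<dots> = P * Q - P * T * Q"
    using P Q T(1) by (simp add: minus_mult_distrib_mat[of _ n n])
  also have "\<dots> = 1\<^sub>m n - X" using PQ(2,4) n' by simp
  finally have "P * (1\<^sub>m n - T) * Q = 1\<^sub>m n - X" .
  hence sim: "similar_mat (1\<^sub>m n - X) (1\<^sub>m n - T)"
    using P Q T(1) X PQ(2,3) n' by (intro similar_matI[of _ _ P Q n]) auto
  have ut: "upper_triangular (1\<^sub>m n - T)"
    using T(2) T(1) unfolding upper_triangular_def by auto
  have c1: "char_poly X = (\<Prod>a\<leftarrow>diag_mat T. [:-a,1:])"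
    using char_poly_similar[OF T(3)] char_poly_upper_triangular[OF T(1) T(2)] by simp
  have c2: "char_poly (1\<^sub>m n - X) = (\<Prod>a\<leftarrow>diag_mat (1\<^sub>m n - T). [:-a,1:])"
  proof -
    have "1\<^sub>m n - T \<in> carrier_mat n n" using minus_carrier_mat[OF T(1)] by blast
    thus ?thesis using char_poly_similar[OF sim] char_poly_upper_triangular[OF _ ut, of n] by simp
  qed
  have d: "diag_mat (1\<^sub>m n - T) = map (\<lambda>z. 1 - z) (diag_mat T)"
    using T(1) by (auto simp: diag_mat_def)
  show ?thesis unfolding c1 c2 proots_linear_prod d by simp
qed


definition fsq :: "complex multiset \<Rightarrow> real" where
  "fsq S = sum_mset (image_mset (\<lambda>z. sqrt (Re z)) S)"

lemma fsq_plus: "fsq (A + B) = fsq A + fsq B" by (simp add: fsq_def)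
lemma fsq_rep: "fsq (replicate_mset n c) = real n * sqrt (Re c)" by (simp add: fsq_def)

lemma nuclear_norm_fsq: "nuclear_norm F = fsq (proots (char_poly (mat_adjoint F * F)))"
  by (simp add: nuclear_norm_def singular_values_def fsq_def)

lemma char_poly_nz: assumes "A \<in> carrier_mat n n" shows "char_poly A \<noteq> 0"
  using degree_monic_char_poly[OF assms] by auto

lemma proots_xpow: fixes p :: "'a::idom poly" assumes "p \<noteq> 0"
  shows "proots ([:0,1:]^n * p) = replicate_mset n 0 + proots p"
proof -
  have "proots ([:0,1:]^n * p) = proots ([:0,1:]^n) + proots p"
    by (rule proots_mult) (use assms in auto)
  moreover have "proots ([:0::'a,1:]^n) = replicate_mset n 0"
    using proots_linear_factor[of "0::'a"] by (simp add: proots_power)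
  ultimately show ?thesis by simp
qed

lemma adj_index: "mat_adjoint A = mat (dim_col A) (dim_row A) (\<lambda>(i,j). conjugate (A $$ (j,i)))"
  by (rule eq_matI) (auto simp: mat_adjoint_def mat_of_rows_def)

lemma adj_carrier: "A \<in> carrier_mat n m \<Longrightarrow> mat_adjoint A \<in> carrier_mat m n"
  by (auto simp: adj_index)




lemma roots_sylv:
  fixes A B :: "'a::field mat"
  assumes A: "A \<in> carrier_mat n m" and B: "B \<in> carrier_mat m n"
  shows "replicate_mset m 0 + proots (char_poly (A*B)) = replicate_mset n 0 + proots (char_poly (B*A))"
proof -
  have "proots ([:0,1:]^m * char_poly (A*B)) = proots ([:0,1:]^n * char_poly (B*A))"
    using sylvester_char_poly[OF A B] by simp
  moreover have "char_poly (A*B) \<noteq> 0" using char_poly_nz[of "A*B" n] A B by auto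
  moreover have "char_poly (B*A) \<noteq> 0" using char_poly_nz[of "B*A" m] A B by auto
  ultimately show ?thesis using proots_xpow by metis
qed

lemma nuclear_norm_alt:
  fixes F :: "complex mat"
  assumes F: "F \<in> carrier_mat n m"
  shows "nuclear_norm F = fsq (proots (char_poly (F * mat_adjoint F)))"
proof -
  have "replicate_mset n 0 + proots (char_poly (mat_adjoint F * F)) =
        replicate_mset m 0 + proots (char_poly (F * mat_adjoint F))"
    by (rule roots_sylv[OF adj_carrier[OF F] F])
  hence "fsq (replicate_mset n 0) + fsq (proots (char_poly (mat_adjoint F * F))) =
        fsq (replicate_mset m 0) + fsq (proots (char_poly (F * mat_adjoint F)))"
    by (metis fsq_plus)
  thus ?thesis by (simp add: fsq_rep nuclear_norm_fsq)
qed

lemma sum_pick: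
  assumes "finite S"
  shows "(\<Sum>j<card S. g (pick S j)) = (\<Sum>x\<in>S. g x)"
proof -
  have inj: "inj_on (pick S) {..<card S}"
    by (rule inj_onI) (metis lessThan_iff nat_neq_iff pick_mono_le)
  have sub: "pick S ` {..<card S} \<subseteq> S" using pick_in_set_le by auto
  have "card (pick S ` {..<card S}) = card S" using card_image[OF inj] by simp
  hence "pick S ` {..<card S} = S" using sub assms by (simp add: card_subset_eq)
  hence "(\<Sum>x\<in>S. g x) = (\<Sum>x\<in>pick S ` {..<card S}. g x)" by simp
  also have "\<dots> = (\<Sum>j<card S. g (pick S j))" by (rule sum.reindex[OF inj, unfolded o_def])
  finally show ?thesis by simp
qed

lemma col_sub_eq:
  assumes A: "A \<in> carrier_mat a M" and S: "S \<subseteq> {..<M}"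
  shows "col_submatrix A S = mat a (card S) (\<lambda>(i,j). A $$ (i, pick S j))"
proof -
  have "{j. j < dim_col A \<and> j \<in> S} = S" using A S by auto
  moreover have "{i. i < dim_row A \<and> i \<in> UNIV} = {..<a}" using A by auto
  ultimately show ?thesis unfolding col_submatrix_def submatrix_def using A by (simp add: pick_UNIV)
qed

lemma pick_lt: assumes "S \<subseteq> {..<M}" "j < card S" shows "pick S j < M"
  using pick_in_set_le[OF assms(2)] assms(1) by auto

lemma pick_inj_iff: assumes "i < card S" "j < card S" shows "pick S i = pick S j \<longleftrightarrow> i = j"
  by (metis assms nat_neq_iff pick_mono_le)




lemma key_nuclear:
  fixes \<Phi> \<Psi> :: "complex mat"
  assumes Phi: "\<Phi> \<in> carrier_mat N M" and Psi: "\<Psi> \<in> carrier_mat r M"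
    and par: "\<Psi> * mat_adjoint \<Psi> = 1\<^sub>m r"
    and nai: "mat_adjoint \<Psi> * \<Psi> = 1\<^sub>m M - mat_adjoint \<Phi> * \<Phi>"
    and K: "K \<subseteq> {..<M}"
  shows "nuclear_norm (col_submatrix \<Psi> ({..<M} - K)) + real (card K)
       = nuclear_norm (col_submatrix \<Phi> K) + real r"
proof -
  define k where "k = card K"
  define Kc where "Kc = {..<M} - K"
  have Kc: "Kc \<subseteq> {..<M}" unfolding Kc_def by auto
  have finK: "finite K" using K finite_subset by blast
  have finKc: "finite Kc" using Kc finite_subset by blast
  define Q where "Q = col_submatrix \<Psi> K"
  define W where "W = col_submatrix \<Psi> Kc"
  define F where "F = col_submatrix \<Phi> K"
  have Qe: "Q = mat r k (\<lambda>(i,j). \<Psi> $$ (i, pick K j))" unfolding Q_def k_def by (rule col_sub_eq[OF Psi K])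
  have We: "W = mat r (card Kc) (\<lambda>(i,j). \<Psi> $$ (i, pick Kc j))" unfolding W_def by (rule col_sub_eq[OF Psi Kc])
  have Fe: "F = mat N k (\<lambda>(i,j). \<Phi> $$ (i, pick K j))" unfolding F_def k_def by (rule col_sub_eq[OF Phi K])
  have Qc: "Q \<in> carrier_mat r k" and Wc: "W \<in> carrier_mat r (card Kc)" and Fc: "F \<in> carrier_mat N k"
    using Qe We Fe by auto
  define G where "G = mat_adjoint F * F"
  have Gc: "G \<in> carrier_mat k k" using Fc adj_carrier[OF Fc] by (simp add: G_def)
  have nai_e: "\<And>a b. a < M \<Longrightarrow> b < M \<Longrightarrow>
     (\<Sum>l<r. cnj (\<Psi> $$ (l,a)) * \<Psi> $$ (l,b)) = (if a = b then 1 else 0) - (\<Sum>l<N. cnj (\<Phi> $$ (l,a)) * \<Phi> $$ (l,b))"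
  proof -
    fix a b assume a: "a < M" and b: "b < M"
    have "(mat_adjoint \<Psi> * \<Psi>) $$ (a,b) = (1\<^sub>m M - mat_adjoint \<Phi> * \<Phi>) $$ (a,b)" using nai by simp
    thus "?thesis a b" using a b Phi Psi
      by (simp add: adj_index scalar_prod_def lessThan_atLeast0)
  qed
  have par_e: "\<And>a b. a < r \<Longrightarrow> b < r \<Longrightarrow>
     (\<Sum>l<M. \<Psi> $$ (a,l) * cnj (\<Psi> $$ (b,l))) = (if a = b then 1 else 0)"
  proof -
    fix a b assume a: "a < r" and b: "b < r"
    have "(\<Psi> * mat_adjoint \<Psi>) $$ (a,b) = (1\<^sub>m r) $$ (a,b)" using par by simp
    thus "?thesis a b" using a b Phi Psi
      by (simp add: adj_index scalar_prod_def lessThan_atLeast0)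
  qed
  have e1: "mat_adjoint Q * Q = 1\<^sub>m k - G"
  proof (rule eq_matI)
    fix i j assume i: "i < dim_row (1\<^sub>m k - G)" and j: "j < dim_col (1\<^sub>m k - G)"
    hence i: "i < k" and j: "j < k" using Gc by auto
    have pi: "pick K i < M" and pj: "pick K j < M" using pick_lt[OF K] i j k_def by auto
    have eq: "pick K i = pick K j \<longleftrightarrow> i = j" using pick_inj_iff i j k_def by auto
    show "(mat_adjoint Q * Q) $$ (i, j) = (1\<^sub>m k - G) $$ (i, j)"
      using nai_e[OF pi pj] i j Gc eq
      by (simp add: G_def Qe Fe adj_index scalar_prod_def lessThan_atLeast0)
  qed (use Qc Gc adj_carrier[OF Qc] in auto)
  have e2: "W * mat_adjoint W = 1\<^sub>m r - Q * mat_adjoint Q"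
  proof (rule eq_matI)
    fix i j assume i: "i < dim_row (1\<^sub>m r - Q * mat_adjoint Q)" and j: "j < dim_col (1\<^sub>m r - Q * mat_adjoint Q)"
    hence i: "i < r" and j: "j < r" using Qc adj_carrier[OF Qc] by auto
    let ?g = "\<lambda>l. \<Psi> $$ (i,l) * cnj (\<Psi> $$ (j,l))"
    have s1: "(\<Sum>l<card Kc. ?g (pick Kc l)) = (\<Sum>l\<in>Kc. ?g l)" by (rule sum_pick[OF finKc])
    have s2: "(\<Sum>l<k. ?g (pick K l)) = (\<Sum>l\<in>K. ?g l)" unfolding k_def by (rule sum_pick[OF finK])
    have s3: "(\<Sum>l\<in>Kc. ?g l) + (\<Sum>l\<in>K. ?g l) = (\<Sum>l<M. ?g l)"
      unfolding Kc_def using K by (subst sum.subset_diff[of K "{..<M}"]) auto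
    have "(W * mat_adjoint W) $$ (i,j) = (\<Sum>l<card Kc. ?g (pick Kc l))"
      using i j by (simp add: We adj_index scalar_prod_def lessThan_atLeast0)
    moreover have "(Q * mat_adjoint Q) $$ (i,j) = (\<Sum>l<k. ?g (pick K l))"
      using i j by (simp add: Qe adj_index scalar_prod_def lessThan_atLeast0)
    ultimately have "(W * mat_adjoint W) $$ (i,j) + (Q * mat_adjoint Q) $$ (i,j) = (if i = j then 1 else 0)"
      using s1 s2 s3 par_e[OF i j] by simp
    thus "(W * mat_adjoint W) $$ (i, j) = (1\<^sub>m r - Q * mat_adjoint Q) $$ (i, j)"
      using i j Qc adj_carrier[OF Qc] by (simp add: eq_diff_eq eq_neg_iff_add_eq_0 split: if_splits)
  qed (use Wc Qc adj_carrier[OF Qc] adj_carrier[OF Wc] in auto)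
  have r1: "replicate_mset k 0 + proots (char_poly (Q * mat_adjoint Q))
          = replicate_mset r 0 + proots (char_poly (mat_adjoint Q * Q))"
    by (rule roots_sylv[OF Qc adj_carrier[OF Qc]])
  have r2: "proots (char_poly (mat_adjoint Q * Q)) = image_mset (\<lambda>z. 1 - z) (proots (char_poly G))"
    unfolding e1 by (rule proots_one_minus[OF Gc])
  have QQc: "Q * mat_adjoint Q \<in> carrier_mat r r" using Qc adj_carrier[OF Qc] by simp
  have r3: "proots (char_poly (W * mat_adjoint W)) = image_mset (\<lambda>z. 1 - z) (proots (char_poly (Q * mat_adjoint Q)))"
    unfolding e2 by (rule proots_one_minus[OF QQc])
  have inv: "\<And>S. image_mset (\<lambda>z::complex. 1 - z) (image_mset (\<lambda>z. 1 - z) S) = S"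
    by (simp add: multiset.map_comp o_def)
  from arg_cong[OF r1, of "image_mset (\<lambda>z. 1 - z)"]
  have "replicate_mset k 1 + proots (char_poly (W * mat_adjoint W)) = replicate_mset r 1 + proots (char_poly G)"
    unfolding r2 r3 by (simp add: inv)
  hence "fsq (replicate_mset k 1) + fsq (proots (char_poly (W * mat_adjoint W)))
       = fsq (replicate_mset r 1) + fsq (proots (char_poly G))" by (metis fsq_plus)
  hence "real k + nuclear_norm W = real r + nuclear_norm F"
    by (simp add: fsq_rep nuclear_norm_alt[OF Wc] nuclear_norm_fsq[of F] G_def)
  thus ?thesis unfolding W_def F_def Kc_def k_def by simp
qed




lemma map_mat_id_eq: "map_mat id A = A" by (rule eq_matI) auto

lemma NE_rel_complex:
  fixes \<Phi> \<Psi> :: "complex mat"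
  assumes Phi: "\<Phi> \<in> carrier_mat N M" and Psi: "\<Psi> \<in> carrier_mat r M"
    and par: "\<Psi> * mat_adjoint \<Psi> = 1\<^sub>m r"
    and nai: "mat_adjoint \<Psi> * \<Psi> = 1\<^sub>m M - mat_adjoint \<Phi> * \<Phi>"
    and k: "k \<le> M"
  shows "NE id (M - k) \<Psi> = NE id k \<Phi> + real (M choose k) * (real r - real k)"
proof -
  define Fk where "Fk = {K. K \<subseteq> {..<M} \<and> card K = k}"
  define h where "h = (\<lambda>K. {..<M} - K)"
  have inj: "inj_on h Fk" unfolding h_def Fk_def by (rule inj_onI) auto
  have img: "h ` Fk = {K. K \<subseteq> {..<M} \<and> card K = M - k}"
  proof (intro equalityI subsetI)
    fix K' assume "K' \<in> h ` Fk"
    then obtain K where K: "K \<subseteq> {..<M}" "card K = k" "K' = {..<M} - K" unfolding Fk_def h_def by auto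
    have "finite K" using K(1) finite_subset by blast
    thus "K' \<in> {K. K \<subseteq> {..<M} \<and> card K = M - k}" using K by (auto simp: card_Diff_subset)
  next
    fix K' assume K': "K' \<in> {K. K \<subseteq> {..<M} \<and> card K = M - k}"
    hence fin: "finite K'" using finite_subset by blast
    have "{..<M} - K' \<in> Fk" using K' k fin unfolding Fk_def by (auto simp: card_Diff_subset)
    moreover have "K' = h ({..<M} - K')" using K' unfolding h_def by auto
    ultimately show "K' \<in> h ` Fk" by blast
  qed
  have dPhi: "dim_col \<Phi> = M" and dPsi: "dim_col \<Psi> = M" using Phi Psi by auto
  have "NE id (M - k) \<Psi> = (\<Sum>K'\<in>h ` Fk. nuclear_norm (col_submatrix \<Psi> K'))"
    unfolding NE_def dPsi img by (simp add: map_mat_id_eq)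
  also have "\<dots> = (\<Sum>K\<in>Fk. nuclear_norm (col_submatrix \<Psi> ({..<M} - K)))"
    by (subst sum.reindex[OF inj]) (simp add: h_def)
  also have "\<dots> = (\<Sum>K\<in>Fk. nuclear_norm (col_submatrix \<Phi> K) + (real r - real k))"
  proof (rule sum.cong[OF refl])
    fix K assume "K \<in> Fk"
    hence K: "K \<subseteq> {..<M}" "card K = k" unfolding Fk_def by auto
    show "nuclear_norm (col_submatrix \<Psi> ({..<M} - K)) = nuclear_norm (col_submatrix \<Phi> K) + (real r - real k)"
      using key_nuclear[OF Phi Psi par nai K(1)] K(2) by simp
  qed
  also have "\<dots> = NE id k \<Phi> + real (card Fk) * (real r - real k)"
    unfolding NE_def dPhi Fk_def by (simp add: sum.distrib map_mat_id_eq)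
  also have "card Fk = M choose k" unfolding Fk_def using n_subsets[of "{..<M}" k] by simp
  finally show ?thesis .
qed




abbreviation cm :: "real mat \<Rightarrow> complex mat" where "cm A \<equiv> map_mat complex_of_real A"

lemma cm_adj: "cm (mat_adjoint A) = mat_adjoint (cm A)"
  by (rule eq_matI) (auto simp: adj_index)

lemma cm_mult: assumes "A \<in> carrier_mat n m" "B \<in> carrier_mat m p"
  shows "cm (A * B) = cm A * cm B"
  by (rule eq_matI) (use assms in \<open>auto simp: scalar_prod_def\<close>)

lemma cm_one: "cm (1\<^sub>m n) = 1\<^sub>m n" by (rule eq_matI) auto

lemma cm_minus: assumes "A \<in> carrier_mat n m" "B \<in> carrier_mat n m"
  shows "cm (A - B) = cm A - cm B"
  by (rule eq_matI) (use assms in auto)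

lemma cm_col_sub: assumes K: "K \<subseteq> {..<dim_col A}"
  shows "cm (col_submatrix A K) = col_submatrix (cm A) K"
proof -
  have e: "{j. j < dim_col A \<and> j \<in> K} = K" using K by auto
  show ?thesis
  proof (rule eq_matI)
    fix i j assume "i < dim_row (col_submatrix (cm A) K)" "j < dim_col (col_submatrix (cm A) K)"
    hence i: "i < dim_row A" and j: "j < card K" by (auto simp: col_submatrix_def submatrix_def e)
    have "pick K j < dim_col A" using pick_in_set_le[OF j] K by auto
    thus "cm (col_submatrix A K) $$ (i, j) = col_submatrix (cm A) K $$ (i, j)"
      using i j by (simp add: col_submatrix_def submatrix_def pick_UNIV e)
  qed (auto simp: col_submatrix_def submatrix_def)
qed

lemma NE_real_cm: "NE complex_of_real k (A::real mat) = NE id k (cm A)"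
  unfolding NE_def by (rule sum.cong) (auto simp: cm_col_sub map_mat_id_eq)

lemma NE_rel_real:
  fixes \<Phi> \<Psi> :: "real mat"
  assumes Phi: "\<Phi> \<in> carrier_mat N M" and Psi: "\<Psi> \<in> carrier_mat r M"
    and par: "\<Psi> * mat_adjoint \<Psi> = 1\<^sub>m r"
    and nai: "mat_adjoint \<Psi> * \<Psi> = 1\<^sub>m M - mat_adjoint \<Phi> * \<Phi>"
    and k: "k \<le> M"
  shows "NE complex_of_real (M - k) \<Psi> = NE complex_of_real k \<Phi> + real (M choose k) * (real r - real k)"
proof -
  have Phic: "cm \<Phi> \<in> carrier_mat N M" and Psic: "cm \<Psi> \<in> carrier_mat r M" using Phi Psi by auto
  have aPhi: "mat_adjoint \<Phi> \<in> carrier_mat M N" and aPsi: "mat_adjoint \<Psi> \<in> carrier_mat M r"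
    using adj_carrier Phi Psi by auto
  have "cm (\<Psi> * mat_adjoint \<Psi>) = cm \<Psi> * mat_adjoint (cm \<Psi>)"
    using cm_mult[OF Psi aPsi] cm_adj by simp
  hence parc: "cm \<Psi> * mat_adjoint (cm \<Psi>) = 1\<^sub>m r" using par cm_one by simp
  have "cm (mat_adjoint \<Psi> * \<Psi>) = mat_adjoint (cm \<Psi>) * cm \<Psi>"
    using cm_mult[OF aPsi Psi] cm_adj by simp
  moreover have "cm (1\<^sub>m M - mat_adjoint \<Phi> * \<Phi>) = 1\<^sub>m M - mat_adjoint (cm \<Phi>) * cm \<Phi>"
    using cm_minus[OF one_carrier_mat mult_carrier_mat[OF aPhi Phi]] cm_mult[OF aPhi Phi] cm_adj cm_one by simp
  ultimately have naic: "mat_adjoint (cm \<Psi>) * cm \<Psi> = 1\<^sub>m M - mat_adjoint (cm \<Phi>) * cm \<Phi>"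
    using nai by simp
  show ?thesis unfolding NE_real_cm by (rule NE_rel_complex[OF Phic Psic parc naic k])
qed

lemma swap_one_minus:
  fixes X Y :: "'a::ring_1 mat"
  assumes "X \<in> carrier_mat M M" "Y \<in> carrier_mat M M" "X = 1\<^sub>m M - Y"
  shows "Y = 1\<^sub>m M - X"
  by (rule eq_matI) (use assms in auto)

lemma final_generic:
  fixes emb :: "'a::conjugatable_field \<Rightarrow> complex"
  assumes rel: "\<And>\<Phi> \<Psi>. \<Phi> \<in> parseval_frames M N \<Longrightarrow> \<Psi> \<in> parseval_frames M (M-N) \<Longrightarrow>
      naimark_complements \<Phi> \<Psi> \<Longrightarrow> NE emb (M-k) \<Psi> = NE emb k \<Phi> + C"
  and ex: "\<And>(A::'a mat) r. A \<in> parseval_frames M r \<Longrightarrow> r \<le> M \<Longrightarrow>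
      \<exists>B \<in> parseval_frames M (M - r). mat_adjoint B * B = 1\<^sub>m M - mat_adjoint A * A"
  and NM: "N < M" and Phi: "\<Phi> \<in> parseval_frames M N" and Psi: "\<Psi> \<in> parseval_frames M (M-N)"
  and nai: "naimark_complements \<Phi> \<Psi>"
  shows "maximizes_NE emb k M N \<Phi> \<longleftrightarrow> maximizes_NE emb (M-k) M (M-N) \<Psi>"
proof
  assume mx: "maximizes_NE emb k M N \<Phi>"
  show "maximizes_NE emb (M-k) M (M-N) \<Psi>" unfolding maximizes_NE_def
  proof (intro conjI ballI)
    show "\<Psi> \<in> parseval_frames M (M-N)" by fact
    fix \<Psi>' :: "'a mat" assume Psi': "\<Psi>' \<in> parseval_frames M (M-N)"
    obtain B where B: "B \<in> parseval_frames M (M - (M-N))" "mat_adjoint B * B = 1\<^sub>m M - mat_adjoint \<Psi>' * \<Psi>'"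
      using ex[OF Psi'] by auto
    have B': "B \<in> parseval_frames M N" using B NM by simp
    have Bc: "B \<in> carrier_mat N M" and Pc: "\<Psi>' \<in> carrier_mat (M-N) M"
      using B' Psi' by (auto simp: parseval_frames_def)
    have "mat_adjoint \<Psi>' * \<Psi>' = 1\<^sub>m M - mat_adjoint B * B"
      by (rule swap_one_minus[OF _ _ B(2)]) (use Bc Pc adj_carrier[OF Bc] adj_carrier[OF Pc] in auto)
    hence "naimark_complements B \<Psi>'" using Bc by (simp add: naimark_complements_def)
    hence "NE emb (M-k) \<Psi>' = NE emb k B + C" using rel[OF B' Psi'] by simp
    also have "\<dots> \<le> NE emb k \<Phi> + C" using mx B' unfolding maximizes_NE_def by auto
    also have "\<dots> = NE emb (M-k) \<Psi>" using rel[OF Phi Psi nai] by simp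
    finally show "NE emb (M-k) \<Psi>' \<le> NE emb (M-k) \<Psi>" .
  qed
next
  assume mx: "maximizes_NE emb (M-k) M (M-N) \<Psi>"
  show "maximizes_NE emb k M N \<Phi>" unfolding maximizes_NE_def
  proof (intro conjI ballI)
    show "\<Phi> \<in> parseval_frames M N" by fact
    fix \<Phi>' :: "'a mat" assume Phi': "\<Phi>' \<in> parseval_frames M N"
    obtain B where B: "B \<in> parseval_frames M (M - N)" "mat_adjoint B * B = 1\<^sub>m M - mat_adjoint \<Phi>' * \<Phi>'"
      using ex[OF Phi'] NM by auto
    have Pc: "\<Phi>' \<in> carrier_mat N M" using Phi' by (auto simp: parseval_frames_def)
    have "naimark_complements \<Phi>' B" using B(2) Pc by (simp add: naimark_complements_def)
    hence "NE emb k \<Phi>' = NE emb (M-k) B - C" using rel[OF Phi' B(1)] by simp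
    also have "\<dots> \<le> NE emb (M-k) \<Psi> - C" using mx B(1) unfolding maximizes_NE_def by auto
    also have "\<dots> = NE emb k \<Phi>" using rel[OF Phi Psi nai] by simp
    finally show "NE emb k \<Phi>' \<le> NE emb k \<Phi>" .
  qed
qed




lemma vec_nonzero_ex: assumes "v \<in> carrier_vec M" "v \<noteq> 0\<^sub>v M" shows "\<exists>j<M. v $ j \<noteq> 0"
proof (rule ccontr)
  assume "\<not> ?thesis"
  hence "v = 0\<^sub>v M" using assms(1) by (intro eq_vecI) auto
  thus False using assms(2) by simp
qed

lemma norm_real: fixes v :: "real vec"
  assumes "v \<in> carrier_vec M" "v \<noteq> 0\<^sub>v M"
  shows "\<exists>c. c * conjugate c * (\<Sum>j<M. v$j * conjugate (v$j)) = 1"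
proof -
  obtain j where j: "j < M" "v $ j \<noteq> 0" using vec_nonzero_ex[OF assms] by auto
  define S where "S = (\<Sum>j<M. v$j * v$j)"
  have "0 < S" unfolding S_def
    by (rule sum_pos2[of _ j]) (use j in \<open>auto simp: zero_less_mult_iff linorder_neq_iff\<close>)
  hence "(1 / sqrt S) * (1 / sqrt S) * S = 1" by (simp add: field_simps)
  hence "\<exists>c. c * c * S = 1" by blast
  thus ?thesis unfolding S_def by simp
qed

lemma norm_complex: fixes v :: "complex vec"
  assumes "v \<in> carrier_vec M" "v \<noteq> 0\<^sub>v M"
  shows "\<exists>c. c * conjugate c * (\<Sum>j<M. v$j * conjugate (v$j)) = 1"
proof -
  obtain j where j: "j < M" "v $ j \<noteq> 0" using vec_nonzero_ex[OF assms] by auto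
  define T where "T = (\<Sum>j<M. (norm (v$j))^2)"
  have "0 < T" unfolding T_def
    by (rule sum_pos2[of _ j]) (use j in auto)
  have S: "(\<Sum>j<M. v$j * conjugate (v$j)) = complex_of_real T"
    unfolding T_def of_real_sum by (rule sum.cong[OF refl]) (unfold conjugate_complex_def, rule complex_norm_square[symmetric])
  have "complex_of_real (1 / sqrt T) * cnj (complex_of_real (1 / sqrt T)) * complex_of_real T = 1"
    using \<open>0 < T\<close> by (simp add: field_simps flip: of_real_mult)
  thus ?thesis unfolding S by (intro exI[of _ "complex_of_real (1 / sqrt T)"]) simp
qed




lemma ext_row:
  fixes \<Psi> :: "'a::conjugatable_field mat"
  assumes norm: "\<And>v::'a vec. v \<in> carrier_vec M \<Longrightarrow> v \<noteq> 0\<^sub>v M \<Longrightarrow>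
      \<exists>c. c * conjugate c * (\<Sum>j<M. v$j * conjugate (v$j)) = 1"
  and Psi: "\<Psi> \<in> carrier_mat r M" and par: "\<Psi> * mat_adjoint \<Psi> = 1\<^sub>m r" and rM: "r < M"
  shows "\<exists>\<Psi>'. \<Psi>' \<in> carrier_mat (Suc r) M \<and> \<Psi>' * mat_adjoint \<Psi>' = 1\<^sub>m (Suc r)
           \<and> (\<forall>i<r. \<forall>j<M. \<Psi>' $$ (i,j) = \<Psi> $$ (i,j))"
proof -
  define c where "c = (\<lambda>i. if i < r then row \<Psi> i else 0\<^sub>v M)"
  define A where "A = mat\<^sub>r M M (\<lambda>i. if i = M - 1 then 0\<^sub>v M else c i)"
  have cc: "c \<in> {0..<M} \<rightarrow> carrier_vec M" using Psi by (auto simp: c_def)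
  have "det A = 0" unfolding A_def by (rule det_row_0) (use rM cc in auto)
  then obtain v where v: "v \<in> carrier_vec M" "v \<noteq> 0\<^sub>v M" "A *\<^sub>v v = 0\<^sub>v M"
    using det_0_iff_vec_prod_zero_field[of A M] by (auto simp: A_def)
  have par_e: "\<And>i l. i < r \<Longrightarrow> l < r \<Longrightarrow> (\<Sum>j<M. \<Psi>$$(i,j) * conjugate (\<Psi>$$(l,j))) = (if i = l then 1 else 0)"
  proof -
    fix i l assume i: "i < r" and l: "l < r"
    have "(\<Psi> * mat_adjoint \<Psi>) $$ (i,l) = (1\<^sub>m r) $$ (i,l)" using par by simp
    thus "?thesis i l" using i l Psi by (simp add: adj_index scalar_prod_def lessThan_atLeast0)
  qed
  have orth: "\<And>i. i < r \<Longrightarrow> (\<Sum>j<M. \<Psi>$$(i,j) * v$j) = 0"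
  proof -
    fix i assume i: "i < r"
    have "(A *\<^sub>v v) $ i = 0" using v(3) i rM by simp
    moreover have "i \<noteq> M - 1" using i rM by arith
    hence "row A i = row \<Psi> i" using i rM Psi unfolding A_def c_def by simp
    moreover have "(A *\<^sub>v v) $ i = row A i \<bullet> v"
      by (rule index_mult_mat_vec) (use i rM in \<open>simp add: A_def\<close>)
    ultimately have "row \<Psi> i \<bullet> v = 0" by simp
    thus "(\<Sum>j<M. \<Psi>$$(i,j) * v$j) = 0"
      using i rM Psi v(1) by (simp add: scalar_prod_def lessThan_atLeast0)
  qed
  obtain s where s: "s * conjugate s * (\<Sum>j<M. v$j * conjugate (v$j)) = 1" using norm[OF v(1) v(2)] by auto
  define w where "w = (\<lambda>j. conjugate (s * v$j))"
  define \<Psi>' where "\<Psi>' = mat (Suc r) M (\<lambda>(i,j). if i < r then \<Psi>$$(i,j) else w j)"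
  have Pc: "\<Psi>' \<in> carrier_mat (Suc r) M" by (simp add: \<Psi>'_def)
  have e: "\<Psi>' * mat_adjoint \<Psi>' = 1\<^sub>m (Suc r)"
  proof (rule eq_matI)
    fix i l assume "i < dim_row (1\<^sub>m (Suc r))" "l < dim_col (1\<^sub>m (Suc r))"
    hence i: "i < Suc r" and l: "l < Suc r" by auto
    have entry: "(\<Psi>' * mat_adjoint \<Psi>') $$ (i,l) = (\<Sum>j<M. \<Psi>'$$(i,j) * conjugate (\<Psi>'$$(l,j)))"
      using i l Pc by (simp add: adj_index scalar_prod_def lessThan_atLeast0 del: One_nat_def)
    show "(\<Psi>' * mat_adjoint \<Psi>') $$ (i,l) = 1\<^sub>m (Suc r) $$ (i,l)"
    proof (cases "i < r")
      case True note ir = this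
      show ?thesis
      proof (cases "l < r")
        case True
        have "(\<Sum>j<M. \<Psi>'$$(i,j) * conjugate (\<Psi>'$$(l,j))) = (\<Sum>j<M. \<Psi>$$(i,j) * conjugate (\<Psi>$$(l,j)))"
          using ir True by (intro sum.cong) (auto simp: \<Psi>'_def)
        thus ?thesis using entry par_e[OF ir True] ir True by simp
      next
        case False
        hence lr: "l = r" using l by simp
        have "(\<Sum>j<M. \<Psi>'$$(i,j) * conjugate (\<Psi>'$$(l,j))) = (\<Sum>j<M. s * (\<Psi>$$(i,j) * v$j))"
          using ir lr by (intro sum.cong) (auto simp: \<Psi>'_def w_def)
        also have "\<dots> = s * (\<Sum>j<M. \<Psi>$$(i,j) * v$j)" by (simp add: sum_distrib_left)
        also have "\<dots> = 0" using orth[OF ir] by simp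
        finally show ?thesis using entry ir lr by simp
      qed
    next
      case False
      hence ir: "i = r" using i by simp
      show ?thesis
      proof (cases "l < r")
        case True
        have "(\<Sum>j<M. \<Psi>'$$(i,j) * conjugate (\<Psi>'$$(l,j))) = (\<Sum>j<M. conjugate (s * (\<Psi>$$(l,j) * v$j)))"
          using ir True by (intro sum.cong) (auto simp: \<Psi>'_def w_def conjugate_dist_mul ac_simps)
        also have "\<dots> = conjugate (\<Sum>j<M. s * (\<Psi>$$(l,j) * v$j))" by (simp add: sum_conjugate)
        also have "\<dots> = conjugate (s * (\<Sum>j<M. \<Psi>$$(l,j) * v$j))" by (simp add: sum_distrib_left)
        also have "\<dots> = 0" using orth[OF True] by simp
        finally show ?thesis using entry ir True by simp
      next
        case False
        hence lr: "l = r" using l by simp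
        have "(\<Sum>j<M. \<Psi>'$$(i,j) * conjugate (\<Psi>'$$(l,j))) = (\<Sum>j<M. s * conjugate s * (v$j * conjugate (v$j)))"
          using ir lr by (intro sum.cong) (auto simp: \<Psi>'_def w_def conjugate_dist_mul ac_simps)
        also have "\<dots> = 1" using s by (simp add: sum_distrib_left)
        finally show ?thesis using entry ir lr by simp
      qed
    qed
  qed (use Pc adj_carrier[OF Pc] in auto)
  have "\<forall>i<r. \<forall>j<M. \<Psi>' $$ (i,j) = \<Psi> $$ (i,j)" by (simp add: \<Psi>'_def)
  thus ?thesis using Pc e by blast
qed




lemma ext_unitary:
  fixes \<Psi> :: "'a::conjugatable_field mat"
  assumes norm: "\<And>v::'a vec. v \<in> carrier_vec M \<Longrightarrow> v \<noteq> 0\<^sub>v M \<Longrightarrow>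
      \<exists>c. c * conjugate c * (\<Sum>j<M. v$j * conjugate (v$j)) = 1"
  shows "\<Psi> \<in> carrier_mat r M \<Longrightarrow> \<Psi> * mat_adjoint \<Psi> = 1\<^sub>m r \<Longrightarrow> r \<le> M \<Longrightarrow>
    \<exists>U. U \<in> carrier_mat M M \<and> U * mat_adjoint U = 1\<^sub>m M \<and> (\<forall>i<r. \<forall>j<M. U $$ (i,j) = \<Psi> $$ (i,j))"
proof (induction "M - r" arbitrary: r \<Psi>)
  case 0
  hence "r = M" by simp
  thus ?case using 0 by blast
next
  case (Suc d)
  hence rM: "r < M" by simp
  obtain \<Psi>' where P': "\<Psi>' \<in> carrier_mat (Suc r) M" "\<Psi>' * mat_adjoint \<Psi>' = 1\<^sub>m (Suc r)"
     "\<forall>i<r. \<forall>j<M. \<Psi>' $$ (i,j) = \<Psi> $$ (i,j)"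
    using ext_row[OF norm Suc.prems(1,2) rM] by blast
  have "d = M - Suc r" using Suc.hyps(2) by simp
  from Suc.hyps(1)[OF this P'(1,2)] rM obtain U where
    U: "U \<in> carrier_mat M M" "U * mat_adjoint U = 1\<^sub>m M" "\<forall>i<Suc r. \<forall>j<M. U $$ (i,j) = \<Psi>' $$ (i,j)"
    by auto
  show ?case using U P'(3) by (intro exI[of _ U]) auto
qed

lemma sum_split_nat:
  fixes g :: "nat \<Rightarrow> 'b::comm_monoid_add"
  assumes "r \<le> M"
  shows "(\<Sum>l<M. g l) = (\<Sum>l<r. g l) + (\<Sum>l<M-r. g (r+l))"
proof -
  obtain d where M: "M = r + d" using assms le_Suc_ex by blast
  have "(\<Sum>l<r+d. g l) = (\<Sum>l<r. g l) + (\<Sum>l<d. g (r+l))"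
  proof (induction d)
    case (Suc d)
    have "(\<Sum>l<r+Suc d. g l) = (\<Sum>l<r+d. g l) + g (r+d)" by simp
    thus ?case using Suc by (simp add: add.assoc)
  qed simp
  thus ?thesis using M by simp
qed

lemma complement_exists:
  fixes A :: "'a::conjugatable_field mat"
  assumes norm: "\<And>v::'a vec. v \<in> carrier_vec M \<Longrightarrow> v \<noteq> 0\<^sub>v M \<Longrightarrow>
      \<exists>c. c * conjugate c * (\<Sum>j<M. v$j * conjugate (v$j)) = 1"
  and A: "A \<in> parseval_frames M r" and rM: "r \<le> M"
  shows "\<exists>B \<in> parseval_frames M (M - r). mat_adjoint B * B = 1\<^sub>m M - mat_adjoint A * A"
proof -
  have Ac: "A \<in> carrier_mat r M" and AA: "A * mat_adjoint A = 1\<^sub>m r"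
    using A by (auto simp: parseval_frames_def)
  obtain U where U: "U \<in> carrier_mat M M" "U * mat_adjoint U = 1\<^sub>m M"
      "\<forall>i<r. \<forall>j<M. U $$ (i,j) = A $$ (i,j)"
    using ext_unitary[OF norm Ac AA rM] by blast
  have UU: "mat_adjoint U * U = 1\<^sub>m M"
    by (rule mat_mult_left_right_inverse[OF U(1) adj_carrier[OF U(1)] U(2)])
  have U_e: "\<And>a b. a < M \<Longrightarrow> b < M \<Longrightarrow> (\<Sum>l<M. U$$(a,l) * conjugate (U$$(b,l))) = (if a = b then 1 else 0)"
  proof -
    fix a b assume a: "a < M" and b: "b < M"
    have "(U * mat_adjoint U) $$ (a,b) = (1\<^sub>m M) $$ (a,b)" using U(2) by simp
    thus "?thesis a b" using a b U(1) by (simp add: adj_index scalar_prod_def lessThan_atLeast0)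
  qed
  have U_e2: "\<And>a b. a < M \<Longrightarrow> b < M \<Longrightarrow> (\<Sum>l<M. conjugate (U$$(l,a)) * U$$(l,b)) = (if a = b then 1 else 0)"
  proof -
    fix a b assume a: "a < M" and b: "b < M"
    have "(mat_adjoint U * U) $$ (a,b) = (1\<^sub>m M) $$ (a,b)" using UU by simp
    thus "?thesis a b" using a b U(1) by (simp add: adj_index scalar_prod_def lessThan_atLeast0)
  qed
  define B where "B = mat (M - r) M (\<lambda>(i,j). U $$ (r+i, j))"
  have Bc: "B \<in> carrier_mat (M - r) M" by (simp add: B_def)
  have BB: "B * mat_adjoint B = 1\<^sub>m (M - r)"
  proof (rule eq_matI)
    fix i j assume "i < dim_row (1\<^sub>m (M - r))" "j < dim_col (1\<^sub>m (M - r))"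
    hence i: "i < M - r" and j: "j < M - r" by auto
    have "(B * mat_adjoint B) $$ (i,j) = (\<Sum>l<M. U$$(r+i,l) * conjugate (U$$(r+j,l)))"
      using i j by (simp add: B_def adj_index scalar_prod_def lessThan_atLeast0)
    also have "\<dots> = (if i = j then 1 else 0)" using U_e[of "r+i" "r+j"] i j by simp
    finally show "(B * mat_adjoint B) $$ (i,j) = 1\<^sub>m (M - r) $$ (i,j)" using i j by simp
  qed (use Bc adj_carrier[OF Bc] in auto)
  have main: "mat_adjoint B * B = 1\<^sub>m M - mat_adjoint A * A"
  proof (rule eq_matI)
    fix a b assume "a < dim_row (1\<^sub>m M - mat_adjoint A * A)" "b < dim_col (1\<^sub>m M - mat_adjoint A * A)"
    hence a: "a < M" and b: "b < M" using Ac adj_carrier[OF Ac] by auto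
    let ?g = "\<lambda>l. conjugate (U$$(l,a)) * U$$(l,b)"
    have e1: "(mat_adjoint B * B) $$ (a,b) = (\<Sum>l<M-r. ?g (r+l))"
      using a b by (simp add: B_def adj_index scalar_prod_def lessThan_atLeast0)
    have "(mat_adjoint A * A) $$ (a,b) = (\<Sum>l<r. conjugate (A$$(l,a)) * A$$(l,b))"
      using a b Ac by (simp add: adj_index scalar_prod_def lessThan_atLeast0)
    also have "\<dots> = (\<Sum>l<r. ?g l)" using U(3) a b by (intro sum.cong) auto
    finally have e2: "(mat_adjoint A * A) $$ (a,b) = (\<Sum>l<r. ?g l)" .
    have "(\<Sum>l<M. ?g l) = (\<Sum>l<r. ?g l) + (\<Sum>l<M-r. ?g (r+l))" by (rule sum_split_nat[OF rM])
    hence "(mat_adjoint B * B) $$ (a,b) + (mat_adjoint A * A) $$ (a,b) = (if a = b then 1 else 0)"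
      using e1 e2 U_e2[OF a b] by simp
    thus "(mat_adjoint B * B) $$ (a,b) = (1\<^sub>m M - mat_adjoint A * A) $$ (a,b)"
      using a b Ac adj_carrier[OF Ac] by (simp add: eq_diff_eq eq_neg_iff_add_eq_0 split: if_splits)
  qed (use Bc adj_carrier[OF Bc] Ac adj_carrier[OF Ac] in auto)
  have "B \<in> parseval_frames M (M - r)" using Bc BB by (simp add: parseval_frames_def)
  thus ?thesis using main by blast
qed

theorem proposition16:
  shows "(\<forall>(M::nat) (N::nat) (k::nat) (\<Phi>::real mat) (\<Psi>::real mat).
            M > N \<longrightarrow> k \<le> M \<longrightarrow> \<Phi> \<in> parseval_frames M N \<longrightarrow>
            \<Psi> \<in> parseval_frames M (M - N) \<longrightarrow> naimark_complements \<Phi> \<Psi> \<longrightarrow>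
            (maximizes_NE complex_of_real k M N \<Phi> \<longleftrightarrow>
             maximizes_NE complex_of_real (M - k) M (M - N) \<Psi>))
       \<and> (\<forall>(M::nat) (N::nat) (k::nat) (\<Phi>::complex mat) (\<Psi>::complex mat).
            M > N \<longrightarrow> k \<le> M \<longrightarrow> \<Phi> \<in> parseval_frames M N \<longrightarrow>
            \<Psi> \<in> parseval_frames M (M - N) \<longrightarrow> naimark_complements \<Phi> \<Psi> \<longrightarrow>
            (maximizes_NE id k M N \<Phi> \<longleftrightarrow> maximizes_NE id (M - k) M (M - N) \<Psi>))"
proof (intro conjI allI impI)
  fix M N k :: nat and \<Phi> \<Psi> :: "real mat"
  assume NM: "N < M" and k: "k \<le> M" and Phi: "\<Phi> \<in> parseval_frames M N"
    and Psi: "\<Psi> \<in> parseval_frames M (M - N)" and nai: "naimark_complements \<Phi> \<Psi>"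
  show "maximizes_NE complex_of_real k M N \<Phi> \<longleftrightarrow> maximizes_NE complex_of_real (M - k) M (M - N) \<Psi>"
  proof (rule final_generic[where C = "real (M choose k) * (real (M - N) - real k)", OF _ _ NM Phi Psi nai])
    fix \<Phi>' \<Psi>' :: "real mat"
    assume P1: "\<Phi>' \<in> parseval_frames M N" and P2: "\<Psi>' \<in> parseval_frames M (M - N)"
      and n: "naimark_complements \<Phi>' \<Psi>'"
    have c1: "\<Phi>' \<in> carrier_mat N M" and c2: "\<Psi>' \<in> carrier_mat (M - N) M"
      and p2: "\<Psi>' * mat_adjoint \<Psi>' = 1\<^sub>m (M - N)"
      using P1 P2 by (auto simp: parseval_frames_def)
    have n': "mat_adjoint \<Psi>' * \<Psi>' = 1\<^sub>m M - mat_adjoint \<Phi>' * \<Phi>'"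
      using n c1 by (simp add: naimark_complements_def)
    show "NE complex_of_real (M - k) \<Psi>' = NE complex_of_real k \<Phi>' + real (M choose k) * (real (M - N) - real k)"
      by (rule NE_rel_real[OF c1 c2 p2 n' k])
  next
    fix A :: "real mat" and r
    assume a: "A \<in> parseval_frames M r" and b: "r \<le> M"
    show "\<exists>B\<in>parseval_frames M (M - r). mat_adjoint B * B = 1\<^sub>m M - mat_adjoint A * A"
      by (rule complement_exists[OF _ a b], rule norm_real, assumption+)
  qed
next
  fix M N k :: nat and \<Phi> \<Psi> :: "complex mat"
  assume NM: "N < M" and k: "k \<le> M" and Phi: "\<Phi> \<in> parseval_frames M N"
    and Psi: "\<Psi> \<in> parseval_frames M (M - N)" and nai: "naimark_complements \<Phi> \<Psi>"
  show "maximizes_NE id k M N \<Phi> \<longleftrightarrow> maximizes_NE id (M - k) M (M - N) \<Psi>"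
  proof (rule final_generic[where C = "real (M choose k) * (real (M - N) - real k)", OF _ _ NM Phi Psi nai])
    fix \<Phi>' \<Psi>' :: "complex mat"
    assume P1: "\<Phi>' \<in> parseval_frames M N" and P2: "\<Psi>' \<in> parseval_frames M (M - N)"
      and n: "naimark_complements \<Phi>' \<Psi>'"
    have c1: "\<Phi>' \<in> carrier_mat N M" and c2: "\<Psi>' \<in> carrier_mat (M - N) M"
      and p2: "\<Psi>' * mat_adjoint \<Psi>' = 1\<^sub>m (M - N)"
      using P1 P2 by (auto simp: parseval_frames_def)
    have n': "mat_adjoint \<Psi>' * \<Psi>' = 1\<^sub>m M - mat_adjoint \<Phi>' * \<Phi>'"
      using n c1 by (simp add: naimark_complements_def)
    show "NE id (M - k) \<Psi>' = NE id k \<Phi>' + real (M choose k) * (real (M - N) - real k)"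
      by (rule NE_rel_complex[OF c1 c2 p2 n' k])
  next
    fix A :: "complex mat" and r
    assume a: "A \<in> parseval_frames M r" and b: "r \<le> M"
    show "\<exists>B\<in>parseval_frames M (M - r). mat_adjoint B * B = 1\<^sub>m M - mat_adjoint A * A"
      by (rule complement_exists[OF _ a b], rule norm_complex, assumption+)
  qed
qed

end
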